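(* Let $(\mathcal M,\mathcal A,\mathcal S,\sigma)$ be an ergodic learning system, $\pi_0\in\mathcal A^{\mathcal S}$ an initial d-policy and $\beta>0$. Run the following Gibbs sampler: enumerate $\mathcal S=\{s_1,\dots,s_{|\mathcal S|}\}$; for $t=0,1,\dots,N-1$, sample $n$ uniformly from $\{1,\dots,|\mathcal S|\}$, sample $a_t^n\sim\sigma^\beta\big(\sum_{m\neq n}\pi_t(s_m),s_n\big)$, and set $\pi_{t+1}(s_n)=a_t^n$ and $\pi_{t+1}(s_m)=\pi_t(s_m)$ for $m\neq n$. Then, as $N\to\infty$, $\pi_r$ converges in distribution to $\mathrm X^\beta$, where $r$ is drawn uniformly from $\{0,1,\dots,N\}$ independently of the chain.
   Context: A learning system is a quadruple $(\mathcal M,\mathcal A,\mathcal S,\sigma)$: $\langle\mathcal M,+\rangle$ a commutative monoid with identity $0$; $\mathcal A\subset\mathcal M$ a finite generating set; $\mathcal S$ a partition of $\mathcal A$ into nonempty contexts; $\sigma(\phi,s)$ a probability distribution on $s$ for each $(\phi,s)\in\mathcal M\times\mathcal S$, satisfying the chain rule $\sigma(\phi,s_1)(a_1)\sigma(\phi+a_1,s_2)(a_2)=\sigma(\phi,s_2)(a_2)\sigma(\phi+a_2,s_1)(a_1)$ for all $\phi\in\mathcal M$, $a_1\in s_1\in\mathcal S$, $a_2\in s_2\in\mathcal S$. A d-policy is $\pi:\mathcal S\to\mathcal A$ with $\pi(s)\in s$; $\mathcal A^{\mathcal S}$ is their set; sums of behaviors are taken in $\mathcal M$. Coherence: $\chi(\pi)=\sum_{n=1}^{|\mathcal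 S|}\log_2\sigma(\sum_{m<n}\pi(s_m),s_n)(\pi(s_n))$ (independent of the enumeration). Softmax over coherence: $\mathrm X^\beta$ is the probability distribution on $\mathcal A^{\mathcal S}$ with $\mathrm X^\beta(\pi)\propto 2^{\beta\chi(\pi)}$. For a distribution $p$ on a finite set, $\sigma^\beta$ denotes $p^\beta$ renormalized: $\sigma^\beta(\phi,s)(a)=\sigma(\phi,s)(a)^\beta/\sum_{a'\in s}\sigma(\phi,s)(a')^\beta$. The system is ergodic if for every nonempty proper subset $C\subsetneq\mathcal A^{\mathcal S}$ there exist $\pi\in C$, $\pi'\notin C$ agreeing on all contexts except one context $\dot s$, with $\sigma(\sum_{s\neq\dot s}\pi(s),\dot s)(\pi'(\dot s))>0$. *)

theory Defs
  imports "HOL-Probability.Probability"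
begin

(* The monoid M is the type 'm (class comm_monoid_add); A is a finite subset
   generating it; S is a partition of A into nonempty contexts; a context is a set
   of actions; sigma phi s a is the probability of action a in context s at phi. *)

inductive_set generated :: "'m::comm_monoid_add set \<Rightarrow> 'm set" for A where
  gen_zero: "0 \<in> generated A"
| gen_add: "x \<in> generated A \<Longrightarrow> a \<in> A \<Longrightarrow> x + a \<in> generated A"

definition learning_system ::
  "'m::comm_monoid_add set \<Rightarrow> 'm set set \<Rightarrow> ('m \<Rightarrow> 'm set \<Rightarrow> 'm \<Rightarrow> real) \<Rightarrow> bool" where
  "learning_system A S \<sigma> \<longleftrightarrow>
     finite A \<and> generated A = UNIV \<and>
     (\<Union>S) = A \<and> (\<forall>s\<in>S. s \<noteq> {}) \<and>
     (\<forall>s1\<in>S. \<forall>s2\<in>S. s1 \<noteq> s2 \<longrightarrow> s1 \<inter> s2 = {}) \<and>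
     (\<forall>\<phi> s. s \<in> S \<longrightarrow> (\<forall>a. \<sigma> \<phi> s a \<ge> 0) \<and> (\<forall>a. a \<notin> s \<longrightarrow> \<sigma> \<phi> s a = 0)
                         \<and> (\<Sum>a\<in>s. \<sigma> \<phi> s a) = 1) \<and>
     (\<forall>\<phi> s1 s2 a1 a2. s1 \<in> S \<longrightarrow> s2 \<in> S \<longrightarrow> a1 \<in> s1 \<longrightarrow> a2 \<in> s2 \<longrightarrow>
        \<sigma> \<phi> s1 a1 * \<sigma> (\<phi> + a1) s2 a2 = \<sigma> \<phi> s2 a2 * \<sigma> (\<phi> + a2) s1 a1)"

definition dpolicies :: "'m set set \<Rightarrow> ('m set \<Rightarrow> 'm) set" where
  "dpolicies S = (\<Pi>\<^sub>E s\<in>S. s)"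

definition ergodic ::
  "'m::comm_monoid_add set set \<Rightarrow> ('m \<Rightarrow> 'm set \<Rightarrow> 'm \<Rightarrow> real) \<Rightarrow> bool" where
  "ergodic S \<sigma> \<longleftrightarrow>
     (\<forall>C. C \<subseteq> dpolicies S \<longrightarrow> C \<noteq> {} \<longrightarrow> C \<noteq> dpolicies S \<longrightarrow>
        (\<exists>\<pi>\<in>C. \<exists>\<pi>'\<in>dpolicies S - C. \<exists>sd\<in>S.
            (\<forall>s\<in>S - {sd}. \<pi> s = \<pi>' s) \<and>
            \<sigma> (\<Sum>s\<in>S - {sd}. \<pi> s) sd (\<pi>' sd) > 0))"

definition elog2 :: "real \<Rightarrow> ereal" where
  "elog2 x = (if x > 0 then ereal (log 2 x) else -\<infinity>)"

definition epow2 :: "ereal \<Rightarrow> real" where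
  "epow2 x = (case x of ereal r \<Rightarrow> 2 powr r | _ \<Rightarrow> 0)"

definition coherence ::
  "'m::comm_monoid_add set set \<Rightarrow> ('m \<Rightarrow> 'm set \<Rightarrow> 'm \<Rightarrow> real) \<Rightarrow> ('m set \<Rightarrow> 'm) \<Rightarrow> ereal" where
  "coherence S \<sigma> \<pi> =
     (let ss = (SOME ss. distinct ss \<and> set ss = S) in
      \<Sum>n<length ss. elog2 (\<sigma> (\<Sum>m<n. \<pi> (ss ! m)) (ss ! n) (\<pi> (ss ! n))))"

definition Xsoft ::
  "'m::comm_monoid_add set set \<Rightarrow> ('m \<Rightarrow> 'm set \<Rightarrow> 'm \<Rightarrow> real) \<Rightarrow> real \<Rightarrow> ('m set \<Rightarrow> 'm) pmf" where
  "Xsoft S \<sigma> \<beta> = embed_pmf (\<lambda>\<pi>. if \<pi> \<in> dpolicies S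
       then epow2 (ereal \<beta> * coherence S \<sigma> \<pi>) /
            (\<Sum>\<pi>'\<in>dpolicies S. epow2 (ereal \<beta> * coherence S \<sigma> \<pi>'))
       else 0)"

definition sigma_pow ::
  "('m \<Rightarrow> 'm set \<Rightarrow> 'm \<Rightarrow> real) \<Rightarrow> real \<Rightarrow> 'm \<Rightarrow> 'm set \<Rightarrow> 'm pmf" where
  "sigma_pow \<sigma> \<beta> \<phi> s = embed_pmf (\<lambda>a. if a \<in> s
       then \<sigma> \<phi> s a powr \<beta> / (\<Sum>a'\<in>s. \<sigma> \<phi> s a' powr \<beta>) else 0)"

definition gibbs_step ::
  "'m::comm_monoid_add set list \<Rightarrow> ('m \<Rightarrow> 'm set \<Rightarrow> 'm \<Rightarrow> real) \<Rightarrow> real \<Rightarrow>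
   ('m set \<Rightarrow> 'm) \<Rightarrow> ('m set \<Rightarrow> 'm) pmf" where
  "gibbs_step ss \<sigma> \<beta> \<pi> =
     bind_pmf (pmf_of_set {..<length ss}) (\<lambda>n.
       map_pmf (\<lambda>a. \<pi>(ss ! n := a))
         (sigma_pow \<sigma> \<beta> (\<Sum>s\<in>set ss - {ss ! n}. \<pi> s) (ss ! n)))"

definition gibbs_dist ::
  "'m::comm_monoid_add set list \<Rightarrow> ('m \<Rightarrow> 'm set \<Rightarrow> 'm \<Rightarrow> real) \<Rightarrow> real \<Rightarrow>
   ('m set \<Rightarrow> 'm) \<Rightarrow> nat \<Rightarrow> ('m set \<Rightarrow> 'm) pmf" where
  "gibbs_dist ss \<sigma> \<beta> \<pi>0 t =
     ((\<lambda>p. bind_pmf p (gibbs_step ss \<sigma> \<beta>)) ^^ t) (return_pmf \<pi>0)"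

definition gibbs_avg ::
  "'m::comm_monoid_add set list \<Rightarrow> ('m \<Rightarrow> 'm set \<Rightarrow> 'm \<Rightarrow> real) \<Rightarrow> real \<Rightarrow>
   ('m set \<Rightarrow> 'm) \<Rightarrow> nat \<Rightarrow> ('m set \<Rightarrow> 'm) pmf" where
  "gibbs_avg ss \<sigma> \<beta> \<pi>0 N =
     bind_pmf (pmf_of_set {0..N}) (gibbs_dist ss \<sigma> \<beta> \<pi>0)"

end

theory Submission
  imports Defs
begin

lemma finite_subseq_conv:
  fixes f :: "nat \<Rightarrow> 'a \<Rightarrow> real"
  assumes "finite D" "\<And>n x. \<bar>f n x\<bar> \<le> B"
  shows "\<exists>r. strict_mono r \<and> (\<forall>x\<in>D. convergent (\<lambda>n. f (r n) x))"
  using assms(1)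
proof (induction D rule: finite_induct)
  case empty
  show ?case by (rule exI[of _ id]) (auto simp: strict_mono_def)
next
  case (insert y D)
  then obtain r where r: "strict_mono r" "\<forall>x\<in>D. convergent (\<lambda>n. f (r n) x)" by blast
  obtain r' where r': "strict_mono r'" "monoseq (\<lambda>n. f (r (r' n)) y)"
    using seq_monosub[of "\<lambda>n. f (r n) y"] by blast
  have "Bseq (\<lambda>n. f (r (r' n)) y)"
    using assms(2) by (intro BseqI'[of _ B]) auto
  then have c1: "convergent (\<lambda>n. f (r (r' n)) y)"
    using r'(2) Bseq_monoseq_convergent by blast
  have "convergent (\<lambda>n. f (r (r' n)) x)" if "x \<in> D" for x
    using convergent_subseq_convergent[OF r(2)[rule_format, OF that] r'(1)] by (simp add: o_def)
  moreover have "strict_mono (\<lambda>n. r (r' n))" using r r' strict_mono_o unfolding o_def by blast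
  ultimately show ?case using c1 by (intro exI[of _ "\<lambda>n. r (r' n)"]) auto
qed

lemma not_tendsto_subseq:
  fixes f :: "nat \<Rightarrow> real"
  assumes "\<not> f \<longlonglongrightarrow> L"
  shows "\<exists>e>0. \<exists>r::nat\<Rightarrow>nat. strict_mono r \<and> (\<forall>n. \<bar>f (r n) - L\<bar> \<ge> e)"
proof -
  from assms obtain e where e: "e > 0" "\<forall>N. \<exists>n\<ge>N. \<bar>f n - L\<bar> \<ge> e"
    unfolding lim_sequentially dist_real_def by (auto simp: not_less)
  then have "infinite {n. \<bar>f n - L\<bar> \<ge> e}"
    unfolding infinite_nat_iff_unbounded_le by auto
  then obtain r :: "nat \<Rightarrow> nat" where "strict_mono r" "\<forall>n. r n \<in> {n. \<bar>f n - L\<bar> \<ge> e}"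
    using infinite_enumerate by blast
  then show ?thesis using e(1) by (intro exI[of _ e] conjI exI[of _ r]) auto
qed

locale fchain =
  fixes D :: "'a set" and K :: "'a \<Rightarrow> 'a \<Rightarrow> real" and X :: "'a \<Rightarrow> real"
  assumes finD: "finite D"
    and Knn: "\<And>x y. K x y \<ge> 0"
    and Xnn: "\<And>x. X x \<ge> 0"
    and Xsum: "(\<Sum>x\<in>D. X x) = 1"
    and Xstat: "\<And>y. y \<in> D \<Longrightarrow> (\<Sum>x\<in>D. X x * K x y) = X y"
    and irred: "\<And>C. C \<subseteq> D \<Longrightarrow> C \<noteq> {} \<Longrightarrow> C \<noteq> D \<Longrightarrow> \<exists>x\<in>C. \<exists>y\<in>D - C. K x y > 0"
begin

lemma Xpos: "x \<in> D \<Longrightarrow> X x > 0"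
proof (rule ccontr)
  assume xD: "x \<in> D" and nx: "\<not> X x > 0"
  define C where "C = {x\<in>D. X x > 0}"
  have "C \<noteq> {}"
  proof
    assume "C = {}"
    then have "\<forall>x\<in>D. X x = 0" using Xnn unfolding C_def by (auto simp: order.order_iff_strict)
    then show False using Xsum by simp
  qed
  moreover have "C \<noteq> D" using xD nx unfolding C_def by auto
  ultimately obtain u v where uv: "u \<in> C" "v \<in> D - C" "K u v > 0"
    using irred[of C] unfolding C_def by auto
  have pos: "X u * K u v > 0" using uv unfolding C_def by simp
  have "X u * K u v \<le> (\<Sum>x\<in>D. X x * K x v)"
    using uv finD by (intro member_le_sum) (auto simp: C_def Xnn Knn)
  also have "\<dots> = X v" using uv Xstat by auto
  finally have "X v > 0" using pos by linarith
  then show False using uv unfolding C_def by auto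
qed

lemma unique_stat:
  fixes \<nu> :: "'a \<Rightarrow> real"
  assumes nn: "\<And>x. x \<in> D \<Longrightarrow> \<nu> x \<ge> 0" and s1: "(\<Sum>x\<in>D. \<nu> x) = 1"
    and st: "\<And>y. y \<in> D \<Longrightarrow> (\<Sum>x\<in>D. \<nu> x * K x y) = \<nu> y"
  shows "\<And>y. y \<in> D \<Longrightarrow> \<nu> y = X y"
proof -
  have Dne: "D \<noteq> {}" using Xsum by auto
  define c where "c = Max ((\<lambda>x. \<nu> x / X x) ` D)"
  have cge: "\<nu> x \<le> c * X x" if "x \<in> D" for x
  proof -
    have "\<nu> x / X x \<le> c" unfolding c_def using finD that by (intro Max_ge) auto
    then show ?thesis using Xpos[OF that] by (simp add: divide_le_eq)
  qed
  define C where "C = {x\<in>D. \<nu> x = c * X x}"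
  have "c \<in> (\<lambda>x. \<nu> x / X x) ` D" unfolding c_def using finD Dne by (intro Max_in) auto
  then obtain x0 where x0: "x0 \<in> D" "c = \<nu> x0 / X x0" by auto
  have "x0 \<in> C" unfolding C_def using x0 Xpos[OF x0(1)] by simp
  have CD: "C = D"
  proof (rule ccontr)
    assume "C \<noteq> D"
    moreover have "C \<subseteq> D" unfolding C_def by blast
    ultimately have "D - C \<noteq> {}" by blast
    moreover have "D - C \<noteq> D" using \<open>x0 \<in> C\<close> x0(1) by blast
    moreover have "D - C \<subseteq> D" by blast
    ultimately have "\<exists>x\<in>D - C. \<exists>y\<in>D - (D - C). K x y > 0" by (rule irred[rotated 1])
    then obtain u v where uv: "u \<in> D - C" "v \<in> D - (D - C)" "K u v > 0" by blast
    have "u \<in> D" "v \<in> D" "v \<in> C" using uv by blast+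
    have "\<nu> u < c * X u" using uv cge[of u] unfolding C_def by auto
    then have "\<nu> u * K u v < c * X u * K u v" using uv(3) by simp
    then have "(\<Sum>x\<in>D. \<nu> x * K x v) < (\<Sum>x\<in>D. c * X x * K x v)"
      using finD \<open>u \<in> D\<close> cge Knn
      by (intro sum_strict_mono_ex1) (auto intro: mult_right_mono)
    also have "\<dots> = c * X v" using Xstat[OF \<open>v \<in> D\<close>]
      by (simp add: sum_distrib_left[symmetric] mult.assoc)
    also have "\<dots> = \<nu> v" using \<open>v \<in> C\<close> unfolding C_def by auto
    finally show False using st[OF \<open>v \<in> D\<close>] by simp
  qed
  then have eq: "\<And>x. x \<in> D \<Longrightarrow> \<nu> x = c * X x" unfolding C_def by auto
  have "1 = (\<Sum>x\<in>D. c * X x)" using s1 eq by (metis (mono_tags, lifting) sum.cong)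
  also have "\<dots> = c" using Xsum by (simp add: sum_distrib_left[symmetric])
  finally show "\<And>y. y \<in> D \<Longrightarrow> \<nu> y = X y" using eq by simp
qed

lemma cesaro:
  fixes mu :: "nat \<Rightarrow> 'a \<Rightarrow> real"
  assumes munn: "\<And>t x. mu t x \<ge> 0" and musum: "\<And>t. (\<Sum>x\<in>D. mu t x) = 1"
    and muSuc: "\<And>t y. y \<in> D \<Longrightarrow> mu (Suc t) y = (\<Sum>x\<in>D. mu t x * K x y)"
    and y0: "y0 \<in> D"
  shows "(\<lambda>N. (\<Sum>t\<le>N. mu t y0) / (real N + 1)) \<longlonglongrightarrow> X y0"
proof (rule ccontr)
  define avg where "avg N x = (\<Sum>t\<le>N. mu t x) / (real N + 1)" for N x
  assume "\<not> (\<lambda>N. (\<Sum>t\<le>N. mu t y0) / (real N + 1)) \<longlonglongrightarrow> X y0"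
  then have "\<not> (\<lambda>N. avg N y0) \<longlonglongrightarrow> X y0" unfolding avg_def .
  then obtain e and r0 :: "nat \<Rightarrow> nat" where e: "e > 0" "strict_mono r0"
     "\<And>n. \<bar>avg (r0 n) y0 - X y0\<bar> \<ge> e"
    using not_tendsto_subseq by blast
  have mule1: "mu t x \<le> 1" if "x \<in> D" for t x
    using member_le_sum[of x D "mu t"] that finD munn musum by auto
  have avgnn: "avg N x \<ge> 0" for N x unfolding avg_def using munn by (intro divide_nonneg_nonneg sum_nonneg) auto
  have avgle: "avg N x \<le> 1" if "x \<in> D" for N x
  proof -
    have "(\<Sum>t\<le>N. mu t x) \<le> (\<Sum>t\<le>N. 1)" using mule1[OF that] by (intro sum_mono) auto
    then show ?thesis unfolding avg_def by simp
  qed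
  have avgsum: "(\<Sum>x\<in>D. avg N x) = 1" for N
  proof -
    have "(\<Sum>x\<in>D. avg N x) = (\<Sum>t\<le>N. \<Sum>x\<in>D. mu t x) / (real N + 1)"
      unfolding avg_def by (simp add: sum_divide_distrib[symmetric] sum.swap[of _ D "atMost N"])
    also have "\<dots> = 1" using musum by simp
    finally show ?thesis .
  qed
  have avgstat: "(\<Sum>x\<in>D. avg N x * K x y) = avg N y + (mu (Suc N) y - mu 0 y) / (real N + 1)"
    if "y \<in> D" for N y
  proof -
    have "(\<Sum>x\<in>D. avg N x * K x y) = (\<Sum>x\<in>D. \<Sum>t\<le>N. mu t x * K x y / (real N + 1))"
      unfolding avg_def by (simp add: sum_distrib_right sum_divide_distrib)
    also have "\<dots> = (\<Sum>t\<le>N. \<Sum>x\<in>D. mu t x * K x y / (real N + 1))" by (rule sum.swap)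
    also have "\<dots> = (\<Sum>t\<le>N. \<Sum>x\<in>D. mu t x * K x y) / (real N + 1)"
      by (simp add: sum_divide_distrib)
    also have "\<dots> = (\<Sum>t\<le>N. mu (Suc t) y) / (real N + 1)" using muSuc[OF that] by simp
    also have "(\<Sum>t\<le>N. mu (Suc t) y) = (\<Sum>t\<le>N. mu t y) + mu (Suc N) y - mu 0 y"
      using sum.atMost_Suc_shift[of "\<lambda>t. mu t y" N] sum.atMost_Suc[of "\<lambda>t. mu t y" N] by simp
    finally show ?thesis unfolding avg_def by (simp add: add_divide_distrib diff_divide_distrib)
  qed
  obtain r :: "nat \<Rightarrow> nat" where r: "strict_mono r"
    "\<forall>x\<in>D. convergent (\<lambda>n. (\<lambda>n x. if x \<in> D then avg (r0 n) x else 0) (r n) x)"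
    using finite_subseq_conv[OF finD, of "\<lambda>n x. if x \<in> D then avg (r0 n) x else 0" 1]
    using avgnn avgle by fastforce
  define q where "q n = r0 (r n)" for n
  have q: "strict_mono q" unfolding q_def using r(1) e(2) strict_mono_o unfolding o_def by blast
  define \<nu> where "\<nu> x = lim (\<lambda>n. avg (q n) x)" for x
  have conv: "(\<lambda>n. avg (q n) x) \<longlonglongrightarrow> \<nu> x" if "x \<in> D" for x
    using r(2) that unfolding \<nu>_def q_def by (simp add: convergent_LIMSEQ_iff)
  have nunn: "\<nu> x \<ge> 0" if "x \<in> D" for x
    using conv[OF that] avgnn by (intro LIMSEQ_le_const) auto
  have nusum: "(\<Sum>x\<in>D. \<nu> x) = 1"
  proof -
    have "(\<lambda>n. \<Sum>x\<in>D. avg (q n) x) \<longlonglongrightarrow> (\<Sum>x\<in>D. \<nu> x)"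
      using conv by (intro tendsto_sum) auto
    moreover have "(\<lambda>n. \<Sum>x\<in>D. avg (q n) x) = (\<lambda>n. 1)" using avgsum by simp
    ultimately have "(\<lambda>n. 1::real) \<longlonglongrightarrow> (\<Sum>x\<in>D. \<nu> x)" by simp
    then show ?thesis using LIMSEQ_unique[OF tendsto_const] by metis
  qed
  have nust: "(\<Sum>x\<in>D. \<nu> x * K x y) = \<nu> y" if "y \<in> D" for y
  proof -
    have l1: "(\<lambda>n. \<Sum>x\<in>D. avg (q n) x * K x y) \<longlonglongrightarrow> (\<Sum>x\<in>D. \<nu> x * K x y)"
      using conv by (intro tendsto_sum tendsto_mult_right) auto
    define err where "err n = (mu (Suc (q n)) y - mu 0 y) / (real (q n) + 1)" for n
    have "err \<longlonglongrightarrow> 0"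
    proof (rule Lim_null_comparison)
      show "(\<lambda>n. inverse (real (Suc n))) \<longlonglongrightarrow> 0" by (rule LIMSEQ_inverse_real_of_nat)
      show "\<forall>\<^sub>F n in sequentially. norm (err n) \<le> inverse (real (Suc n))"
      proof (intro always_eventually allI)
        fix n
        have "\<bar>mu (Suc (q n)) y - mu 0 y\<bar> \<le> 1"
          using mule1[OF that, of "Suc (q n)"] mule1[OF that, of 0] munn[of "Suc (q n)" y] munn[of 0 y]
          by (simp add: abs_le_iff)
        moreover have "real n + 1 \<le> real (q n) + 1" using seq_suble[OF q, of n] by simp
        ultimately have "\<bar>mu (Suc (q n)) y - mu 0 y\<bar> / (real (q n) + 1) \<le> 1 / (real n + 1)"
          by (intro frac_le) auto
        then show "norm (err n) \<le> inverse (real (Suc n))"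
          unfolding err_def by (simp add: abs_divide inverse_eq_divide add.commute)
      qed
    qed
    then have "(\<lambda>n. avg (q n) y + err n) \<longlonglongrightarrow> \<nu> y + 0" using conv[OF that] by (intro tendsto_add)
    then have l2: "(\<lambda>n. \<Sum>x\<in>D. avg (q n) x * K x y) \<longlonglongrightarrow> \<nu> y"
      using avgstat[OF that] unfolding err_def by simp
    show ?thesis using LIMSEQ_unique[OF l1 l2] .
  qed
  have "\<nu> y0 = X y0" using unique_stat[OF nunn nusum nust y0] by blast
  then have "(\<lambda>n. \<bar>avg (q n) y0 - X y0\<bar>) \<longlonglongrightarrow> \<bar>X y0 - X y0\<bar>"
    using conv[OF y0] by (intro tendsto_rabs tendsto_diff) auto
  then have "e \<le> 0" using e(3) unfolding q_def by (intro LIMSEQ_le_const) auto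
  then show False using e(1) by simp
qed

end


fun Pr :: "('m::comm_monoid_add \<Rightarrow> 'm set \<Rightarrow> 'm \<Rightarrow> real) \<Rightarrow> ('m set \<Rightarrow> 'm) \<Rightarrow> 'm \<Rightarrow> 'm set list \<Rightarrow> real" where
  "Pr \<sigma> \<pi> \<phi> [] = 1"
| "Pr \<sigma> \<pi> \<phi> (s # l) = \<sigma> \<phi> s (\<pi> s) * Pr \<sigma> \<pi> (\<phi> + \<pi> s) l"

lemma Pr_cong: "(\<And>s. s \<in> set l \<Longrightarrow> \<pi> s = \<pi>' s) \<Longrightarrow> Pr \<sigma> \<pi> \<phi> l = Pr \<sigma> \<pi>' \<phi> l"
  by (induction l arbitrary: \<phi>) auto

lemma Pr_nth: "Pr \<sigma> \<pi> \<phi> l = (\<Prod>n<length l. \<sigma> (\<phi> + (\<Sum>m<n. \<pi> (l ! m))) (l ! n) (\<pi> (l ! n)))"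
proof (induction l arbitrary: \<phi>)
  case Nil
  then show ?case by simp
next
  case (Cons s l)
  have "(\<Prod>n<length (s # l). \<sigma> (\<phi> + (\<Sum>m<n. \<pi> ((s # l) ! m))) ((s # l) ! n) (\<pi> ((s # l) ! n)))
     = \<sigma> \<phi> s (\<pi> s) * (\<Prod>n<length l. \<sigma> (\<phi> + (\<Sum>m<Suc n. \<pi> ((s # l) ! m))) (l ! n) (\<pi> (l ! n)))"
    apply (subst length_Cons, subst prod.lessThan_Suc_shift)
    apply (simp del: sum.lessThan_Suc prod.lessThan_Suc)
    done
  also have "(\<Prod>n<length l. \<sigma> (\<phi> + (\<Sum>m<Suc n. \<pi> ((s # l) ! m))) (l ! n) (\<pi> (l ! n)))
      = (\<Prod>n<length l. \<sigma> (\<phi> + \<pi> s + (\<Sum>m<n. \<pi> (l ! m))) (l ! n) (\<pi> (l ! n)))"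
    by (simp add: sum.lessThan_Suc_shift add.assoc del: sum.lessThan_Suc)
  finally show ?case using Cons[of "\<phi> + \<pi> s"] by simp
qed

lemma Pr_nonneg: "(\<And>\<phi> s a. \<sigma> \<phi> s a \<ge> 0) \<Longrightarrow> Pr \<sigma> \<pi> \<phi> l \<ge> 0"
  by (induction l arbitrary: \<phi>) auto

lemma Pr_snoc: "s \<notin> set l \<Longrightarrow> distinct l \<Longrightarrow>
   Pr \<sigma> \<pi> \<phi> (l @ [s]) = Pr \<sigma> \<pi> \<phi> l * \<sigma> (\<phi> + (\<Sum>t\<in>set l. \<pi> t)) s (\<pi> s)"
proof (induction l arbitrary: \<phi>)
  case Nil
  then show ?case by simp
next
  case (Cons t l)
  then have "Pr \<sigma> \<pi> (\<phi> + \<pi> t) (l @ [s]) = Pr \<sigma> \<pi> (\<phi> + \<pi> t) l * \<sigma> (\<phi> + \<pi> t + (\<Sum>t\<in>set l. \<pi> t)) s (\<pi> s)"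
    by auto
  moreover have "(\<Sum>t\<in>set (t # l). \<pi> t) = \<pi> t + (\<Sum>t\<in>set l. \<pi> t)" using Cons.prems by simp
  ultimately show ?case by (simp add: add.assoc mult.assoc)
qed

definition chain_rule :: "'m::comm_monoid_add set set \<Rightarrow> ('m \<Rightarrow> 'm set \<Rightarrow> 'm \<Rightarrow> real) \<Rightarrow> bool" where
  "chain_rule S \<sigma> \<longleftrightarrow> (\<forall>\<phi> s1 s2 a1 a2. s1 \<in> S \<longrightarrow> s2 \<in> S \<longrightarrow> a1 \<in> s1 \<longrightarrow> a2 \<in> s2 \<longrightarrow>
        \<sigma> \<phi> s1 a1 * \<sigma> (\<phi> + a1) s2 a2 = \<sigma> \<phi> s2 a2 * \<sigma> (\<phi> + a2) s1 a1)"

lemma Pr_front: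
  assumes cr: "chain_rule S \<sigma>" and pi: "\<And>s. s \<in> S \<Longrightarrow> \<pi> s \<in> s"
  shows "distinct l \<Longrightarrow> set l \<subseteq> S \<Longrightarrow> s \<in> set l \<Longrightarrow>
    Pr \<sigma> \<pi> \<phi> l = \<sigma> \<phi> s (\<pi> s) * Pr \<sigma> \<pi> (\<phi> + \<pi> s) (remove1 s l)"
proof (induction l arbitrary: \<phi>)
  case Nil
  then show ?case by simp
next
  case (Cons t l)
  show ?case
  proof (cases "t = s")
    case True
    then show ?thesis by simp
  next
    case False
    then have sl: "s \<in> set l" using Cons.prems by simp
    have IH: "Pr \<sigma> \<pi> (\<phi> + \<pi> t) l = \<sigma> (\<phi> + \<pi> t) s (\<pi> s) * Pr \<sigma> \<pi> (\<phi> + \<pi> t + \<pi> s) (remove1 s l)"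
      using Cons.IH[of "\<phi> + \<pi> t"] Cons.prems sl by simp
    have tS: "t \<in> S" and sS: "s \<in> S" using Cons.prems sl by auto
    have CR: "\<sigma> \<phi> t (\<pi> t) * \<sigma> (\<phi> + \<pi> t) s (\<pi> s) = \<sigma> \<phi> s (\<pi> s) * \<sigma> (\<phi> + \<pi> s) t (\<pi> t)"
      using cr tS sS pi[OF tS] pi[OF sS] unfolding chain_rule_def by blast
    have "Pr \<sigma> \<pi> \<phi> (t # l) = (\<sigma> \<phi> t (\<pi> t) * \<sigma> (\<phi> + \<pi> t) s (\<pi> s)) * Pr \<sigma> \<pi> (\<phi> + \<pi> t + \<pi> s) (remove1 s l)"
      using IH by (simp add: mult.assoc)
    also have "\<dots> = \<sigma> \<phi> s (\<pi> s) * (\<sigma> (\<phi> + \<pi> s) t (\<pi> t) * Pr \<sigma> \<pi> (\<phi> + \<pi> s + \<pi> t) (remove1 s l))"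
      unfolding CR by (simp add: add_ac mult.assoc)
    also have "\<dots> = \<sigma> \<phi> s (\<pi> s) * Pr \<sigma> \<pi> (\<phi> + \<pi> s) (remove1 s (t # l))"
      using False by simp
    finally show ?thesis .
  qed
qed

lemma Pr_perm:
  assumes cr: "chain_rule S \<sigma>" and pi: "\<And>s. s \<in> S \<Longrightarrow> \<pi> s \<in> s"
  shows "distinct l \<Longrightarrow> distinct l' \<Longrightarrow> set l = set l' \<Longrightarrow> set l \<subseteq> S \<Longrightarrow>
    Pr \<sigma> \<pi> \<phi> l = Pr \<sigma> \<pi> \<phi> l'"
proof (induction l arbitrary: \<phi> l')
  case Nil
  then show ?case by simp
next
  case (Cons s l)
  have "Pr \<sigma> \<pi> \<phi> l' = \<sigma> \<phi> s (\<pi> s) * Pr \<sigma> \<pi> (\<phi> + \<pi> s) (remove1 s l')"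
    using Pr_front[OF cr pi, of l' s \<phi>] Cons.prems by auto
  moreover have "Pr \<sigma> \<pi> (\<phi> + \<pi> s) l = Pr \<sigma> \<pi> (\<phi> + \<pi> s) (remove1 s l')"
    using Cons.prems by (intro Cons.IH) auto
  ultimately show ?case by simp
qed

lemma sum_elog2:
  fixes t :: "nat \<Rightarrow> real" and k :: nat
  shows "(\<And>n. n < k \<Longrightarrow> t n \<ge> 0) \<Longrightarrow> (\<Sum>n<k. elog2 (t n)) =
     (if \<forall>n<k. t n > 0 then ereal (log 2 (\<Prod>n<k. t n)) else -\<infinity>)"
proof (induction k)
  case 0
  then show ?case by simp
next
  case (Suc k)
  then have IH: "(\<Sum>n<k. elog2 (t n)) = (if \<forall>n<k. t n > 0 then ereal (log 2 (\<Prod>n<k. t n)) else -\<infinity>)"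
    by simp
  show ?case
  proof (cases "\<forall>n<Suc k. t n > 0")
    case True
    then have P: "(\<Prod>n<k. t n) > 0" by (intro prod_pos) auto
    have tk: "t k > 0" using True by simp
    have "(\<Sum>n<Suc k. elog2 (t n)) = ereal (log 2 (\<Prod>n<k. t n)) + ereal (log 2 (t k))"
      using IH True tk by (simp add: elog2_def)
    also have "\<dots> = ereal (log 2 (\<Prod>n<Suc k. t n))"
      using P tk by (simp add: log_mult_pos)
    finally show ?thesis using True by simp
  next
    case False
    then show ?thesis using IH by (auto simp: elog2_def less_Suc_eq)
  qed
qed

lemma epow2_sum:
  fixes t :: "nat \<Rightarrow> real" and k :: nat
  assumes "\<beta> > 0" "\<And>n. n < k \<Longrightarrow> t n \<ge> 0"
  shows "epow2 (ereal \<beta> * (\<Sum>n<k. elog2 (t n))) = (\<Prod>n<k. t n) powr \<beta>"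
proof (cases "\<forall>n<k. t n > 0")
  case True
  then have P: "(\<Prod>n<k. t n) > 0" by (intro prod_pos) auto
  have "epow2 (ereal \<beta> * (\<Sum>n<k. elog2 (t n))) = 2 powr (log 2 (\<Prod>n<k. t n) * \<beta>)"
    using sum_elog2[of k t] assms True by (simp add: epow2_def mult.commute)
  also have "\<dots> = (\<Prod>n<k. t n) powr \<beta>" using P by (simp add: powr_powr[symmetric])
  finally show ?thesis .
next
  case False
  then obtain n where "n < k" "t n = 0" using assms(2) by force
  then have "(\<Prod>n<k. t n) = 0" by (intro prod_zero) auto
  then show ?thesis using sum_elog2[of k t] assms False by (simp add: epow2_def)
qed

lemma pmf_embed_fin:
  fixes f :: "'a \<Rightarrow> real"
  assumes "finite A" "\<And>x. f x \<ge> 0" "\<And>x. x \<notin> A \<Longrightarrow> f x = 0" "sum f A = 1"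
  shows "pmf (embed_pmf f) x = f x"
proof -
  have "(\<integral>\<^sup>+x. ennreal (f x) \<partial>count_space UNIV) = (\<Sum>x\<in>A. ennreal (f x))"
    by (rule nn_integral_count_space') (use assms in auto)
  also have "\<dots> = ennreal (sum f A)" using assms(2) by simp
  also have "\<dots> = 1" using assms(4) by simp
  finally show ?thesis by (rule pmf_embed_pmf[OF assms(2)])
qed

locale lsys =
  fixes A :: "'m::comm_monoid_add set" and S :: "'m set set" and \<sigma> :: "'m \<Rightarrow> 'm set \<Rightarrow> 'm \<Rightarrow> real"
  assumes ls: "learning_system A S \<sigma>"
begin

lemma LS1: "finite A" using ls unfolding learning_system_def by (elim conjE) assumption
lemma LS2: "generated A = UNIV" using ls unfolding learning_system_def by (elim conjE) assumption
lemma LS3: "\<Union>S = A" using ls unfolding learning_system_def by (elim conjE) assumption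
lemma LS4: "\<forall>\<phi> s. s \<in> S \<longrightarrow> (\<forall>a. \<sigma> \<phi> s a \<ge> 0) \<and> (\<forall>a. a \<notin> s \<longrightarrow> \<sigma> \<phi> s a = 0)
                         \<and> (\<Sum>a\<in>s. \<sigma> \<phi> s a) = 1"
  using ls unfolding learning_system_def by (elim conjE) assumption
lemma LS5: "chain_rule S \<sigma>"
  using ls unfolding learning_system_def chain_rule_def by (elim conjE) assumption
lemmas LS = LS1 LS2 LS3 LS4 LS5

lemma finA: "finite A" by (rule LS(1))
lemma US: "\<Union>S = A" by (rule LS(3))
lemma finS: "finite S" using finA US finite_UnionD by blast
lemma fin_ctx: "s \<in> S \<Longrightarrow> finite s" using finA US finite_subset[of s A] by blast
lemma \<sigma>nn: "s \<in> S \<Longrightarrow> \<sigma> \<phi> s a \<ge> 0" using LS(4) by simp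
lemma \<sigma>out: "s \<in> S \<Longrightarrow> a \<notin> s \<Longrightarrow> \<sigma> \<phi> s a = 0" using LS(4) by simp
lemma \<sigma>sum: "s \<in> S \<Longrightarrow> (\<Sum>a\<in>s. \<sigma> \<phi> s a) = 1" using LS(4) by simp
lemma cr: "chain_rule S \<sigma>" by (rule LS(5))
lemma gen: "generated A = UNIV" by (rule LS(2))

lemma ex_pos: assumes "s \<in> S" shows "\<exists>a\<in>s. \<sigma> \<phi> s a > 0"
proof (rule ccontr)
  assume "\<not> ?thesis"
  then have "\<forall>a\<in>s. \<sigma> \<phi> s a = 0" using \<sigma>nn[OF assms, of \<phi>] by (simp add: not_less order.antisym)
  then have "(\<Sum>a\<in>s. \<sigma> \<phi> s a) = 0" by simp
  then show False using \<sigma>sum[OF assms] by simp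
qed

lemma Pr_nonneg': "set l \<subseteq> S \<Longrightarrow> Pr \<sigma> \<pi> \<phi> l \<ge> 0"
  by (induction l arbitrary: \<phi>) (auto intro!: mult_nonneg_nonneg \<sigma>nn)

lemma Pr_pos_exists: "distinct l \<Longrightarrow> set l \<subseteq> S \<Longrightarrow> \<exists>\<pi>. (\<forall>s\<in>set l. \<pi> s \<in> s) \<and> Pr \<sigma> \<pi> \<phi> l > 0"
proof (induction l arbitrary: \<phi>)
  case Nil
  then show ?case by simp
next
  case (Cons s l)
  then have sS: "s \<in> S" by simp
  obtain a where a: "a \<in> s" "\<sigma> \<phi> s a > 0" using ex_pos[OF sS] by blast
  obtain \<pi>' where \<pi>': "\<forall>t\<in>set l. \<pi>' t \<in> t" "Pr \<sigma> \<pi>' (\<phi> + a) l > 0"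
    using Cons.IH[of "\<phi> + a"] Cons.prems by auto
  define \<pi> where "\<pi> = \<pi>'(s := a)"
  have "Pr \<sigma> \<pi> (\<phi> + a) l = Pr \<sigma> \<pi>' (\<phi> + a) l"
    using Cons.prems unfolding \<pi>_def by (intro Pr_cong) auto
  then have "Pr \<sigma> \<pi> \<phi> (s # l) > 0" using a \<pi>' unfolding \<pi>_def by simp
  moreover have "\<forall>t\<in>set (s # l). \<pi> t \<in> t" using a \<pi>' unfolding \<pi>_def by auto
  ultimately show ?case by blast
qed

lemma Zs_pos: assumes "s \<in> S" shows "(\<Sum>a\<in>s. \<sigma> \<phi> s a powr \<beta>) > 0"
proof -
  obtain a where a: "a \<in> s" "\<sigma> \<phi> s a > 0" using ex_pos[OF assms] by blast
  have "\<sigma> \<phi> s a powr \<beta> \<le> (\<Sum>a\<in>s. \<sigma> \<phi> s a powr \<beta>)"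
    using a fin_ctx[OF assms] by (intro member_le_sum) auto
  moreover have "\<sigma> \<phi> s a powr \<beta> > 0" using a by simp
  ultimately show ?thesis by linarith
qed

lemma pmf_sp: assumes "s \<in> S"
  shows "pmf (sigma_pow \<sigma> \<beta> \<phi> s) a =
     (if a \<in> s then \<sigma> \<phi> s a powr \<beta> / (\<Sum>a'\<in>s. \<sigma> \<phi> s a' powr \<beta>) else 0)"
proof -
  define Z where "Z = (\<Sum>a'\<in>s. \<sigma> \<phi> s a' powr \<beta>)"
  define f where "f = (\<lambda>a. if a \<in> s then \<sigma> \<phi> s a powr \<beta> / Z else 0)"
  have Z: "Z > 0" unfolding Z_def by (rule Zs_pos[OF assms])
  have fnn: "\<And>x. f x \<ge> 0" unfolding f_def using Z by (auto intro: divide_nonneg_nonneg less_imp_le)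
  have fout: "\<And>x. x \<notin> s \<Longrightarrow> f x = 0" unfolding f_def by simp
  have "sum f s = (\<Sum>a\<in>s. \<sigma> \<phi> s a powr \<beta> / Z)" unfolding f_def by (rule sum.cong) auto
  also have "\<dots> = Z / Z" unfolding Z_def by (rule sum_divide_distrib[symmetric])
  also have "\<dots> = 1" using Z by simp
  finally have fs: "sum f s = 1" .
  have "pmf (embed_pmf f) a = f a" by (rule pmf_embed_fin[OF fin_ctx[OF assms] fnn fout fs])
  then show ?thesis unfolding sigma_pow_def f_def Z_def .
qed

lemma set_sp: assumes "s \<in> S" shows "set_pmf (sigma_pow \<sigma> \<beta> \<phi> s) \<subseteq> s"
proof
  fix a assume "a \<in> set_pmf (sigma_pow \<sigma> \<beta> \<phi> s)"
  then have "pmf (sigma_pow \<sigma> \<beta> \<phi> s) a \<noteq> 0" by (simp add: set_pmf_iff)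
  then show "a \<in> s" unfolding pmf_sp[OF assms] by presburger
qed

lemma finD: "finite (dpolicies S)"
  unfolding dpolicies_def using finS fin_ctx by (intro finite_PiE) auto

lemma coh:
  assumes "\<beta> > 0" "distinct ss" "set ss = S" "\<pi> \<in> dpolicies S"
  shows "epow2 (ereal \<beta> * coherence S \<sigma> \<pi>) = (Pr \<sigma> \<pi> 0 ss) powr \<beta>"
proof -
  define ss0 where "ss0 = (SOME ss. distinct ss \<and> set ss = S)"
  have ss0: "distinct ss0 \<and> set ss0 = S"
    unfolding ss0_def using finite_distinct_list[OF finS] by (metis (mono_tags, lifting) someI_ex)
  have pi: "\<And>s. s \<in> S \<Longrightarrow> \<pi> s \<in> s" using assms(4) unfolding dpolicies_def by auto
  have "epow2 (ereal \<beta> * coherence S \<sigma> \<pi>) = (\<Prod>n<length ss0. \<sigma> (\<Sum>m<n. \<pi> (ss0 ! m)) (ss0 ! n) (\<pi> (ss0 ! n))) powr \<beta>"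
    unfolding coherence_def Let_def ss0_def[symmetric]
    using ss0 by (intro epow2_sum assms(1) \<sigma>nn) auto
  also have "\<dots> = (Pr \<sigma> \<pi> 0 ss0) powr \<beta>" by (simp add: Pr_nth)
  also have "Pr \<sigma> \<pi> 0 ss0 = Pr \<sigma> \<pi> 0 ss"
    using ss0 assms by (intro Pr_perm[OF cr pi]) auto
  finally show ?thesis .
qed

lemma epow2_nonneg: "epow2 x \<ge> 0"
  unfolding epow2_def by (cases x) auto

lemma Zx_pos:
  assumes "\<beta> > 0" "distinct ss" "set ss = S"
  shows "(\<Sum>\<pi>\<in>dpolicies S. (Pr \<sigma> \<pi> 0 ss) powr \<beta>) > 0"
proof -
  obtain \<pi> where \<pi>: "\<forall>s\<in>set ss. \<pi> s \<in> s" "Pr \<sigma> \<pi> 0 ss > 0"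
    using Pr_pos_exists[of ss 0] assms by auto
  define \<pi>' where "\<pi>' = restrict \<pi> S"
  have D: "\<pi>' \<in> dpolicies S" unfolding dpolicies_def \<pi>'_def using \<pi>(1) assms by auto
  have "Pr \<sigma> \<pi>' 0 ss = Pr \<sigma> \<pi> 0 ss" unfolding \<pi>'_def using assms by (intro Pr_cong) auto
  then have "(Pr \<sigma> \<pi>' 0 ss) powr \<beta> > 0" using \<pi>(2) by simp
  moreover have "(Pr \<sigma> \<pi>' 0 ss) powr \<beta> \<le> (\<Sum>\<pi>\<in>dpolicies S. (Pr \<sigma> \<pi> 0 ss) powr \<beta>)"
    using D finD by (intro member_le_sum) auto
  ultimately show ?thesis by linarith
qed

lemma pmf_X:
  assumes "\<beta> > 0" "distinct ss" "set ss = S"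
  shows "pmf (Xsoft S \<sigma> \<beta>) \<pi> = (if \<pi> \<in> dpolicies S then (Pr \<sigma> \<pi> 0 ss) powr \<beta> /
           (\<Sum>\<pi>'\<in>dpolicies S. (Pr \<sigma> \<pi>' 0 ss) powr \<beta>) else 0)"
proof -
  have eq: "(\<Sum>\<pi>'\<in>dpolicies S. epow2 (ereal \<beta> * coherence S \<sigma> \<pi>')) = (\<Sum>\<pi>'\<in>dpolicies S. (Pr \<sigma> \<pi>' 0 ss) powr \<beta>)"
    using coh[OF assms] by (intro sum.cong) auto
  have "pmf (Xsoft S \<sigma> \<beta>) \<pi> = (if \<pi> \<in> dpolicies S then epow2 (ereal \<beta> * coherence S \<sigma> \<pi>) /
            (\<Sum>\<pi>'\<in>dpolicies S. epow2 (ereal \<beta> * coherence S \<sigma> \<pi>')) else 0)"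
    unfolding Xsoft_def
  proof (rule pmf_embed_fin[OF finD])
    show "(\<Sum>\<pi>\<in>dpolicies S. if \<pi> \<in> dpolicies S then epow2 (ereal \<beta> * coherence S \<sigma> \<pi>) /
            (\<Sum>\<pi>'\<in>dpolicies S. epow2 (ereal \<beta> * coherence S \<sigma> \<pi>')) else 0) = 1"
    proof -
      let ?Z = "(\<Sum>\<pi>'\<in>dpolicies S. epow2 (ereal \<beta> * coherence S \<sigma> \<pi>'))"
      have "(\<Sum>\<pi>\<in>dpolicies S. if \<pi> \<in> dpolicies S then epow2 (ereal \<beta> * coherence S \<sigma> \<pi>) / ?Z else 0)
          = (\<Sum>\<pi>\<in>dpolicies S. epow2 (ereal \<beta> * coherence S \<sigma> \<pi>) / ?Z)"
        by (rule sum.cong) auto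
      also have "\<dots> = ?Z / ?Z" by (rule sum_divide_distrib[symmetric])
      also have "\<dots> = 1" using Zx_pos[OF assms] eq by simp
      finally show ?thesis .
    qed
  qed (simp_all add: sum_nonneg epow2_nonneg)
  then show ?thesis using eq coh[OF assms] by simp
qed

end


lemma pmf_map_upd:
  "pmf (map_pmf (\<lambda>a. \<pi>(c := a)) M) \<pi>' = (if \<forall>s. s \<noteq> c \<longrightarrow> \<pi> s = \<pi>' s then pmf M (\<pi>' c) else 0)"
proof (cases "\<forall>s. s \<noteq> c \<longrightarrow> \<pi> s = \<pi>' s")
  case True
  then have eq: "\<pi>' = (\<lambda>a. \<pi>(c := a)) (\<pi>' c)" by auto
  have inj: "inj (\<lambda>a. \<pi>(c := a))" by (rule injI) (metis fun_upd_same)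
  have "pmf (map_pmf (\<lambda>a. \<pi>(c := a)) M) \<pi>' = pmf (map_pmf (\<lambda>a. \<pi>(c := a)) M) ((\<lambda>a. \<pi>(c := a)) (\<pi>' c))"
    using eq by simp
  also have "\<dots> = pmf M (\<pi>' c)" by (rule pmf_map_inj'[OF inj])
  finally show ?thesis using True by simp
next
  case False
  then have "\<pi>' \<notin> (\<lambda>a. \<pi>(c := a)) ` set_pmf M" by auto
  then have "pmf (map_pmf (\<lambda>a. \<pi>(c := a)) M) \<pi>' = 0" by (rule pmf_map_outside)
  then show ?thesis by (simp only: if_not_P[OF False])
qed

lemma gibbs_dist_Suc: "gibbs_dist ss \<sigma> \<beta> \<pi>0 (Suc t) = bind_pmf (gibbs_dist ss \<sigma> \<beta> \<pi>0 t) (gibbs_step ss \<sigma> \<beta>)"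
  unfolding gibbs_dist_def by simp

lemma pmf_bind_fin:
  assumes "finite D" "set_pmf M \<subseteq> D"
  shows "pmf (bind_pmf M f) y = (\<Sum>x\<in>D. pmf M x * pmf (f x) y)"
proof -
  have "pmf (bind_pmf M f) y = (\<integral>x. pmf (f x) y \<partial>measure_pmf M)" by (rule pmf_bind)
  also have "\<dots> = (\<Sum>x\<in>D. pmf M x *\<^sub>R pmf (f x) y)"
    using assms by (intro integral_measure_pmf) auto
  finally show ?thesis by simp
qed

locale gsys = lsys +
  fixes ss :: "'m::comm_monoid_add set list" and \<beta> :: real
  assumes dist: "distinct ss" and setss: "set ss = S" and \<beta>pos: "\<beta> > 0" and Sne: "S \<noteq> {}"
begin

definition phi :: "nat \<Rightarrow> ('m set \<Rightarrow> 'm) \<Rightarrow> 'm" where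
  "phi i \<pi> = (\<Sum>s\<in>set ss - {ss ! i}. \<pi> s)"

definition T :: "nat \<Rightarrow> ('m set \<Rightarrow> 'm) \<Rightarrow> ('m set \<Rightarrow> 'm) \<Rightarrow> real" where
  "T i \<pi> \<pi>' = (if \<forall>s. s \<noteq> ss ! i \<longrightarrow> \<pi> s = \<pi>' s
      then pmf (sigma_pow \<sigma> \<beta> (phi i \<pi>) (ss ! i)) (\<pi>' (ss ! i)) else 0)"

lemma npos: "length ss > 0" using Sne setss by auto

lemma ssS: "i < length ss \<Longrightarrow> ss ! i \<in> S" using setss nth_mem by blast

lemma pmf_step: "pmf (gibbs_step ss \<sigma> \<beta> \<pi>) \<pi>' = (\<Sum>i<length ss. T i \<pi> \<pi>') / real (length ss)"
  unfolding gibbs_step_def T_def phi_def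
  using npos by (subst pmf_bind_pmf_of_set) (auto simp: pmf_map_upd)

lemma T_nn: "T i \<pi> \<pi>' \<ge> 0" unfolding T_def by simp

lemma set_step: assumes "\<pi> \<in> dpolicies S" shows "set_pmf (gibbs_step ss \<sigma> \<beta> \<pi>) \<subseteq> dpolicies S"
proof
  fix \<rho> assume "\<rho> \<in> set_pmf (gibbs_step ss \<sigma> \<beta> \<pi>)"
  then have "\<rho> \<in> (\<Union>i\<in>{..<length ss}. (\<lambda>a. \<pi>(ss ! i := a)) ` set_pmf (sigma_pow \<sigma> \<beta> (\<Sum>s\<in>set ss - {ss ! i}. \<pi> s) (ss ! i)))"
  proof -
    have U: "set_pmf (pmf_of_set {..<length ss}) = {..<length ss}" using npos by (intro set_pmf_of_set) auto
    show ?thesis using \<open>\<rho> \<in> set_pmf (gibbs_step ss \<sigma> \<beta> \<pi>)\<close> unfolding gibbs_step_def by (simp add: U)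
  qed
  then obtain i a where ia: "i < length ss" "a \<in> set_pmf (sigma_pow \<sigma> \<beta> (\<Sum>s\<in>set ss - {ss ! i}. \<pi> s) (ss ! i))"
     "\<rho> = \<pi>(ss ! i := a)" by blast
  have "a \<in> ss ! i" using set_sp[OF ssS[OF ia(1)]] ia(2) by blast
  then have "\<pi>(ss ! i := a) \<in> Pi\<^sub>E (insert (ss ! i) S) (\<lambda>s. s)"
    using assms unfolding dpolicies_def by (intro PiE_fun_upd) auto
  then show "\<rho> \<in> dpolicies S" using ia ssS[OF ia(1)] unfolding dpolicies_def by (simp add: insert_absorb)
qed

lemma set_dist: assumes "\<pi>0 \<in> dpolicies S" shows "set_pmf (gibbs_dist ss \<sigma> \<beta> \<pi>0 t) \<subseteq> dpolicies S"
proof (induction t)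
  case 0
  then show ?case using assms unfolding gibbs_dist_def by simp
next
  case (Suc t)
  then show ?case unfolding gibbs_dist_Suc using set_step by (auto simp: set_bind_pmf)
qed

definition Z where "Z = (\<Sum>\<pi>'\<in>dpolicies S. (Pr \<sigma> \<pi>' 0 ss) powr \<beta>)"

lemma pmfX: "pmf (Xsoft S \<sigma> \<beta>) \<pi> = (if \<pi> \<in> dpolicies S then (Pr \<sigma> \<pi> 0 ss) powr \<beta> / Z else 0)"
  unfolding Z_def by (rule pmf_X[OF \<beta>pos dist setss])

lemma Pr_split:
  assumes "i < length ss" "\<pi> \<in> dpolicies S"
  shows "Pr \<sigma> \<pi> 0 ss = Pr \<sigma> \<pi> 0 (remove1 (ss ! i) ss) * \<sigma> (phi i \<pi>) (ss ! i) (\<pi> (ss ! i))"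
proof -
  let ?c = "ss ! i" let ?l = "remove1 (ss ! i) ss"
  have pi: "\<And>s. s \<in> S \<Longrightarrow> \<pi> s \<in> s" using assms(2) unfolding dpolicies_def by auto
  have c: "?c \<in> set ss" using assms(1) by simp
  have l: "distinct ?l" "?c \<notin> set ?l" "set ?l = set ss - {?c}" using dist by auto
  have "Pr \<sigma> \<pi> 0 ss = Pr \<sigma> \<pi> 0 (?l @ [?c])"
    using dist l c setss by (intro Pr_perm[OF cr pi]) auto
  also have "\<dots> = Pr \<sigma> \<pi> 0 ?l * \<sigma> (0 + (\<Sum>t\<in>set ?l. \<pi> t)) ?c (\<pi> ?c)"
    using l by (intro Pr_snoc) auto
  finally show ?thesis using l unfolding phi_def by simp
qed

lemma detailed:
  assumes "\<pi> \<in> dpolicies S" "\<pi>' \<in> dpolicies S" "i < length ss"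
  shows "pmf (Xsoft S \<sigma> \<beta>) \<pi> * T i \<pi> \<pi>' = pmf (Xsoft S \<sigma> \<beta>) \<pi>' * T i \<pi>' \<pi>"
proof (cases "\<forall>s. s \<noteq> ss ! i \<longrightarrow> \<pi> s = \<pi>' s")
  case False
  then have F2: "\<not> (\<forall>s. s \<noteq> ss ! i \<longrightarrow> \<pi>' s = \<pi> s)" by metis
  have "T i \<pi> \<pi>' = 0" unfolding T_def by (rule if_not_P[OF False])
  moreover have "T i \<pi>' \<pi> = 0" unfolding T_def by (rule if_not_P[OF F2])
  ultimately show ?thesis by simp
next
  case True
  let ?c = "ss ! i" let ?l = "remove1 (ss ! i) ss"
  have True': "\<forall>s. s \<noteq> ss ! i \<longrightarrow> \<pi>' s = \<pi> s" using True by metis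
  have cS: "?c \<in> S" by (rule ssS[OF assms(3)])
  have cl: "?c \<notin> set ?l" using dist by simp
  have W: "Pr \<sigma> \<pi> 0 ?l = Pr \<sigma> \<pi>' 0 ?l" using True cl by (intro Pr_cong) metis
  have ph: "phi i \<pi>' = phi i \<pi>" unfolding phi_def using True' by (intro sum.cong) auto
  define w where "w = Pr \<sigma> \<pi> 0 ?l"
  define \<phi> where "\<phi> = phi i \<pi>"
  define Zc where "Zc = (\<Sum>a\<in>?c. \<sigma> \<phi> ?c a powr \<beta>)"
  have x1: "\<pi> ?c \<in> ?c" and x2: "\<pi>' ?c \<in> ?c" using assms(1,2) cS unfolding dpolicies_def by auto
  have wnn: "w \<ge> 0" unfolding w_def using setss by (intro Pr_nonneg') auto
  have s1: "\<sigma> \<phi> ?c (\<pi> ?c) \<ge> 0" "\<sigma> \<phi> ?c (\<pi>' ?c) \<ge> 0" using \<sigma>nn[OF cS] by auto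
  have X1: "pmf (Xsoft S \<sigma> \<beta>) \<pi> = w powr \<beta> * \<sigma> \<phi> ?c (\<pi> ?c) powr \<beta> / Z"
    unfolding pmfX using assms Pr_split[OF assms(3,1)] wnn s1 by (simp add: w_def \<phi>_def powr_mult)
  have X2: "pmf (Xsoft S \<sigma> \<beta>) \<pi>' = w powr \<beta> * \<sigma> \<phi> ?c (\<pi>' ?c) powr \<beta> / Z"
    unfolding pmfX using assms Pr_split[OF assms(3,2)] wnn s1 W ph by (simp add: w_def \<phi>_def powr_mult)
  have T1: "T i \<pi> \<pi>' = \<sigma> \<phi> ?c (\<pi>' ?c) powr \<beta> / Zc"
    unfolding T_def using True x2 by (simp add: pmf_sp[OF cS] Zc_def \<phi>_def)
  have T2: "T i \<pi>' \<pi> = \<sigma> \<phi> ?c (\<pi> ?c) powr \<beta> / Zc"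
    unfolding T_def using True' x1 ph by (simp add: pmf_sp[OF cS] Zc_def \<phi>_def)
  show ?thesis unfolding X1 X2 T1 T2 by (simp add: field_simps)
qed


definition Kr where "Kr \<pi> \<pi>' = pmf (gibbs_step ss \<sigma> \<beta> \<pi>) \<pi>'"
definition Xp where "Xp \<pi> = pmf (Xsoft S \<sigma> \<beta>) \<pi>"

lemma Kr_sum: "\<pi> \<in> dpolicies S \<Longrightarrow> (\<Sum>\<pi>'\<in>dpolicies S. Kr \<pi> \<pi>') = 1"
  unfolding Kr_def by (intro sum_pmf_eq_1 finD set_step)

lemma db:
  assumes "\<pi> \<in> dpolicies S" "\<pi>' \<in> dpolicies S"
  shows "Xp \<pi> * Kr \<pi> \<pi>' = Xp \<pi>' * Kr \<pi>' \<pi>"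
proof -
  have "Xp \<pi> * Kr \<pi> \<pi>' = (\<Sum>i<length ss. Xp \<pi> * T i \<pi> \<pi>') / real (length ss)"
    unfolding Kr_def pmf_step by (simp add: sum_distrib_left)
  also have "\<dots> = (\<Sum>i<length ss. Xp \<pi>' * T i \<pi>' \<pi>) / real (length ss)"
    unfolding Xp_def using detailed[OF assms] by (intro arg_cong[where f="\<lambda>x. x / _"] sum.cong) auto
  also have "\<dots> = Xp \<pi>' * Kr \<pi>' \<pi>"
    unfolding Kr_def pmf_step by (simp add: sum_distrib_left)
  finally show ?thesis .
qed

lemma set_X: "set_pmf (Xsoft S \<sigma> \<beta>) \<subseteq> dpolicies S"
proof
  fix \<pi> assume "\<pi> \<in> set_pmf (Xsoft S \<sigma> \<beta>)"
  then have "pmf (Xsoft S \<sigma> \<beta>) \<pi> \<noteq> 0" by (simp add: set_pmf_iff)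
  then show "\<pi> \<in> dpolicies S" unfolding pmfX by presburger
qed

lemma Xstat: "y \<in> dpolicies S \<Longrightarrow> (\<Sum>x\<in>dpolicies S. Xp x * Kr x y) = Xp y"
proof -
  assume y: "y \<in> dpolicies S"
  have "(\<Sum>x\<in>dpolicies S. Xp x * Kr x y) = (\<Sum>x\<in>dpolicies S. Xp y * Kr y x)"
    using db y by (intro sum.cong) auto
  also have "\<dots> = Xp y * (\<Sum>x\<in>dpolicies S. Kr y x)" by (simp add: sum_distrib_left)
  also have "\<dots> = Xp y" using Kr_sum[OF y] by simp
  finally show ?thesis .
qed

lemma irredK:
  assumes erg: "ergodic S \<sigma>"
    and C: "C \<subseteq> dpolicies S" "C \<noteq> {}" "C \<noteq> dpolicies S"
  shows "\<exists>x\<in>C. \<exists>y\<in>dpolicies S - C. Kr x y > 0"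
proof -
  obtain \<pi> \<pi>' sd where h: "\<pi> \<in> C" "\<pi>' \<in> dpolicies S - C" "sd \<in> S"
    "\<forall>s\<in>S - {sd}. \<pi> s = \<pi>' s" "\<sigma> (\<Sum>s\<in>S - {sd}. \<pi> s) sd (\<pi>' sd) > 0"
    using erg[unfolded ergodic_def, rule_format, OF C] by blast
  have "sd \<in> set ss" using h(3) setss by simp
  then obtain i where i: "i < length ss" "ss ! i = sd" by (auto simp: in_set_conv_nth)
  have piD: "\<pi> \<in> dpolicies S" "\<pi>' \<in> dpolicies S" using h C by auto
  have agree: "\<forall>s. s \<noteq> ss ! i \<longrightarrow> \<pi> s = \<pi>' s"
  proof (intro allI impI)
    fix s assume "s \<noteq> ss ! i"
    show "\<pi> s = \<pi>' s"
    proof (cases "s \<in> S")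
      case True
      then have "s \<in> S - {sd}" using \<open>s \<noteq> ss ! i\<close> i(2) by blast
      then show ?thesis using h(4) by blast
    next
      case False
      have "\<pi> s = undefined" by (rule PiE_arb[OF piD(1)[unfolded dpolicies_def] False])
      moreover have "\<pi>' s = undefined" by (rule PiE_arb[OF piD(2)[unfolded dpolicies_def] False])
      ultimately show ?thesis by simp
    qed
  qed
  have ph: "phi i \<pi> = (\<Sum>s\<in>S - {sd}. \<pi> s)" unfolding phi_def i(2) setss by (rule refl)
  have x2: "\<pi>' sd \<in> sd" using PiE_mem[OF piD(2)[unfolded dpolicies_def] h(3)] .
  have Tpos: "T i \<pi> \<pi>' > 0"
  proof -
    have "T i \<pi> \<pi>' = pmf (sigma_pow \<sigma> \<beta> (phi i \<pi>) sd) (\<pi>' sd)"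
      unfolding T_def using agree i(2) by (simp only: if_P)
    also have "\<dots> = \<sigma> (phi i \<pi>) sd (\<pi>' sd) powr \<beta> / (\<Sum>a'\<in>sd. \<sigma> (phi i \<pi>) sd a' powr \<beta>)"
      using x2 by (simp only: pmf_sp[OF h(3)] if_P)
    also have "\<dots> > 0"
    proof (rule divide_pos_pos)
      show "\<sigma> (phi i \<pi>) sd (\<pi>' sd) powr \<beta> > 0" using h(5) unfolding ph by simp
      show "(\<Sum>a'\<in>sd. \<sigma> (phi i \<pi>) sd a' powr \<beta>) > 0" by (rule Zs_pos[OF h(3)])
    qed
    finally show ?thesis .
  qed
  have "T i \<pi> \<pi>' \<le> (\<Sum>j<length ss. T j \<pi> \<pi>')"
    using i by (intro member_le_sum T_nn) auto
  then have "(\<Sum>j<length ss. T j \<pi> \<pi>') / real (length ss) > 0" using Tpos npos by simp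
  then have "Kr \<pi> \<pi>' > 0" unfolding Kr_def pmf_step .
  then show ?thesis using h by blast
qed

lemma main:
  assumes erg: "ergodic S \<sigma>" and pi0: "\<pi>0 \<in> dpolicies S"
  shows "(\<lambda>N. pmf (gibbs_avg ss \<sigma> \<beta> \<pi>0 N) \<pi>) \<longlonglongrightarrow> pmf (Xsoft S \<sigma> \<beta>) \<pi>"
proof -
  interpret fc: fchain "dpolicies S" Kr Xp
  proof
    show "finite (dpolicies S)" by (rule finD)
    show "\<And>x y. 0 \<le> Kr x y" unfolding Kr_def by simp
    show "\<And>x. 0 \<le> Xp x" unfolding Xp_def by simp
    show "(\<Sum>x\<in>dpolicies S. Xp x) = 1" unfolding Xp_def by (intro sum_pmf_eq_1 finD set_X)
    show "\<And>y. y \<in> dpolicies S \<Longrightarrow> (\<Sum>x\<in>dpolicies S. Xp x * Kr x y) = Xp y" by (rule Xstat)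
    show "\<And>C. C \<subseteq> dpolicies S \<Longrightarrow> C \<noteq> {} \<Longrightarrow> C \<noteq> dpolicies S \<Longrightarrow>
        \<exists>x\<in>C. \<exists>y\<in>dpolicies S - C. 0 < Kr x y" by (rule irredK[OF erg])
  qed
  define mu where "mu t x = pmf (gibbs_dist ss \<sigma> \<beta> \<pi>0 t) x" for t x
  have avg: "pmf (gibbs_avg ss \<sigma> \<beta> \<pi>0 N) \<pi> = (\<Sum>t\<le>N. mu t \<pi>) / (real N + 1)" for N
    unfolding gibbs_avg_def mu_def
    by (subst pmf_bind_pmf_of_set) (auto simp: atLeast0AtMost)
  show ?thesis
  proof (cases "\<pi> \<in> dpolicies S")
    case True
    have "(\<lambda>N. (\<Sum>t\<le>N. mu t \<pi>) / (real N + 1)) \<longlonglongrightarrow> Xp \<pi>"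
    proof (rule fc.cesaro)
      show "\<And>t x. 0 \<le> mu t x" unfolding mu_def by simp
      show "\<And>t. (\<Sum>x\<in>dpolicies S. mu t x) = 1" unfolding mu_def
        by (intro sum_pmf_eq_1 finD set_dist pi0)
      show "\<And>t y. y \<in> dpolicies S \<Longrightarrow> mu (Suc t) y = (\<Sum>x\<in>dpolicies S. mu t x * Kr x y)"
        unfolding mu_def Kr_def gibbs_dist_Suc by (intro pmf_bind_fin finD set_dist pi0)
    qed (rule True)
    then show ?thesis unfolding avg Xp_def .
  next
    case False
    have "pmf (gibbs_avg ss \<sigma> \<beta> \<pi>0 N) \<pi> = 0" for N
    proof -
      have "set_pmf (gibbs_avg ss \<sigma> \<beta> \<pi>0 N) \<subseteq> dpolicies S"
        unfolding gibbs_avg_def using set_dist[OF pi0] by (auto simp: set_bind_pmf)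
      then have "\<pi> \<notin> set_pmf (gibbs_avg ss \<sigma> \<beta> \<pi>0 N)" using False by blast
      then show ?thesis by (simp add: set_pmf_iff)
    qed
    moreover have "pmf (Xsoft S \<sigma> \<beta>) \<pi> = 0" using False unfolding pmfX by simp
    ultimately show ?thesis by simp
  qed
qed

end


lemma gen_empty: "x \<in> generated {} \<Longrightarrow> x = 0"
  by (induction rule: generated.induct) auto

lemma trivial_pmf:
  fixes p :: "('m::comm_monoid_add set \<Rightarrow> 'm) pmf"
  assumes "\<And>x::'m. x = 0"
  shows "pmf p \<pi> = 1"
proof -
  have "\<And>f g :: 'm set \<Rightarrow> 'm. f = g" using assms by (metis ext)
  then have "set_pmf p \<subseteq> {\<pi>}" by blast
  then show ?thesis using sum_pmf_eq_1[of "{\<pi>}" p] by simp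
qed

theorem mainTheorem3:
  fixes A :: "'m::comm_monoid_add set" and S :: "'m set set"
    and \<sigma> :: "'m \<Rightarrow> 'm set \<Rightarrow> 'm \<Rightarrow> real"
    and ss :: "'m set list" and \<pi>0 :: "'m set \<Rightarrow> 'm" and \<beta> :: real
  assumes "learning_system A S \<sigma>"
    and "ergodic S \<sigma>"
    and "distinct ss" and "set ss = S"
    and "\<pi>0 \<in> dpolicies S"
    and "\<beta> > 0"
  shows "\<forall>\<pi>. (\<lambda>N. pmf (gibbs_avg ss \<sigma> \<beta> \<pi>0 N) \<pi>) \<longlonglongrightarrow> pmf (Xsoft S \<sigma> \<beta>) \<pi>"
proof (cases "S = {}")
  case True
  interpret lsys A S \<sigma> by unfold_locales (rule assms(1))
  have "A = {}" using US True by simp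
  then have z: "\<And>x::'m. x = 0" using gen gen_empty by blast
  show ?thesis using trivial_pmf[OF z] by simp
next
  case False
  interpret gsys A S \<sigma> ss \<beta>
    by unfold_locales (use assms False in auto)
  show ?thesis using main[OF assms(2,5)] by blast
qed

end
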